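(* Let $\Gamma\subset\mathrm{SL}_2(\mathbb{R})$ be a Fuchsian group and $k$ an integer. Let $\mathfrak{o}_k=\mathcal{O}\partial_\tau\oplus\mathcal{O}$ be the space of first-order differential operators $f(\tau)\partial_\tau+g(\tau)$ with $f,g$ holomorphic on the upper half-plane $\mathbb{H}$, equipped with the weight-$k$ action $\|_k$ of $\Gamma$. Then the vector subspace $$\mathfrak{d}_k:=\{\,2p(\tau)\partial_\tau+k\,p'(\tau)\;:\;p\in\mathbb{C}[\tau],\ \deg p\le 2\,\}$$ of $\mathfrak{o}_k$ is a $\Gamma$-submodule, i.e. $a\|_k\gamma\in\mathfrak{d}_k$ for all $a\in\mathfrak{d}_k$ and $\gamma\in\Gamma$.
   Context: $\Gamma$ acts on $\mathbb{H}$ by $\gamma\tau=\frac{a\tau+b}{c\tau+d}$ for $\gamma=\begin{psmatrix}a&b\\c&d\end{psmatrix}$, and $j_\gamma(\tau)=c\tau+d$. $\mathcal{O}$ denotes the holomorphic functions on $\mathbb{H}$ and $\mathcal{O}[\partial_\tau]$ the finite-order linear differential operators with coefficients in $\mathcal{O}$. The weight-$k$ action on $\mathcal{O}[\partial_\tau]$ is $(a\|_k\gamma)(\tau,\partial_\tau)=j_\gamma(\tau)^{-k}\,a(\gamma\tau,\partial_{\gamma\tau})\,j_\gamma(\tau)^{k}$, where $j_\gamma^{\pm k}$ act as multiplication operators and $\partial_{\gamma\tau}=(c\tau+d)^2\partial_\tau$. *)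

theory Defs
  imports "HOL-Analysis.Analysis" "HOL-Computational_Algebra.Polynomial"
begin

definition SL2R :: "(real^2^2) set" where
  "SL2R = {A. det A = 1}"

definition fuchsian :: "(real^2^2) set \<Rightarrow> bool" where
  "fuchsian G \<longleftrightarrow> G \<subseteq> SL2R \<and> mat 1 \<in> G
     \<and> (\<forall>A\<in>G. \<forall>B\<in>G. A ** B \<in> G) \<and> (\<forall>A\<in>G. matrix_inv A \<in> G)
     \<and> (\<forall>A\<in>G. \<exists>e>0. \<forall>B\<in>G. dist B A < e \<longrightarrow> B = A)"

definition upper_half_plane :: "complex set" where
  "upper_half_plane = {z. Im z > 0}"

definition jfac :: "real^2^2 \<Rightarrow> complex \<Rightarrow> complex" where
  "jfac A \<tau> = of_real (A$2$1) * \<tau> + of_real (A$2$2)"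

definition moeb :: "real^2^2 \<Rightarrow> complex \<Rightarrow> complex" where
  "moeb A \<tau> = (of_real (A$1$1) * \<tau> + of_real (A$1$2)) / jfac A \<tau>"

text \<open>A first-order differential operator f(tau) d/dtau + g(tau) is represented by the pair (f, g).\<close>

type_synonym dop = "(complex \<Rightarrow> complex) \<times> (complex \<Rightarrow> complex)"

definition apply_dop :: "dop \<Rightarrow> (complex \<Rightarrow> complex) \<Rightarrow> complex \<Rightarrow> complex" where
  "apply_dop a h \<tau> = fst a \<tau> * deriv h \<tau> + snd a \<tau> * h \<tau>"

text \<open>The weight-k action as an operator:
  (a||_k gamma) h = j^{-k} * a(gamma tau, d_{gamma tau}) (j^k h), with d_{gamma tau} = j^2 d_tau.\<close>

definition slash_apply :: "int \<Rightarrow> real^2^2 \<Rightarrow> dop \<Rightarrow> (complex \<Rightarrow> complex) \<Rightarrow> complex \<Rightarrow> complex" where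
  "slash_apply k A a h \<tau> =
     (jfac A \<tau>) powi (-k) *
       (fst a (moeb A \<tau>) * (jfac A \<tau>)^2 * deriv (\<lambda>t. (jfac A t) powi k * h t) \<tau>
        + snd a (moeb A \<tau>) * ((jfac A \<tau>) powi k * h \<tau>))"

definition dk :: "int \<Rightarrow> dop set" where
  "dk k = {((\<lambda>\<tau>. 2 * poly p \<tau>), (\<lambda>\<tau>. of_int k * poly (pderiv p) \<tau>)) | p :: complex poly. degree p \<le> 2}"

end

theory Submission
  imports Defs
begin

lemma poly_deg2:
  fixes p :: "complex poly"
  assumes "degree p \<le> 2"
  shows "p = [:coeff p 0, coeff p 1, coeff p 2:]"
proof (rule poly_eqI)
  fix n show "coeff p n = coeff [:coeff p 0, coeff p 1, coeff p 2:] n"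
  proof (cases "n \<le> 2")
    case True
    then have "n = 0 \<or> n = 1 \<or> n = 2" by auto
    then show ?thesis by (auto simp: numeral_2_eq_2)
  next
    case False
    then have "coeff p n = 0" using assms by (simp add: coeff_eq_0)
    moreover have "coeff [:coeff p 0, coeff p 1, coeff p 2:] n = 0"
      using False by (cases n; cases "n - 1"; cases "n - 2") (auto simp: numeral_2_eq_2)
    ultimately show ?thesis by simp
  qed
qed

lemma key_identity:
  fixes J P h h' c al be de p0 p1 p2 kk :: complex
  assumes J: "J \<noteq> 0" and P: "P \<noteq> 0" and det: "al * de - be * c = 1"
    and Jdef: "J = c * t + de"
  shows "inverse P * ((2 * (p0 + p1 * ((al*t+be)/J) + p2 * ((al*t+be)/J)^2)) * J^2 *
            (kk * (P / J) * c * h + P * h')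
          + kk * (p1 + 2 * p2 * ((al*t+be)/J)) * (P * h))
     = 2 * (p0*de^2 + p1*be*de + p2*be^2 + (2*p0*c*de + p1*(al*de+be*c) + 2*p2*al*be) * t
             + (p0*c^2 + p1*al*c + p2*al^2) * t^2) * h'
       + kk * ((2*p0*c*de + p1*(al*de+be*c) + 2*p2*al*be) + 2 * (p0*c^2 + p1*al*c + p2*al^2) * t) * h"
proof -
  define L where "L = al*t+be"
  have e: "c * L + 1 = al * J" using det Jdef unfolding L_def by (simp add: algebra_simps)
  have "inverse P * ((2 * (p0 + p1 * (L/J) + p2 * (L/J)^2)) * J^2 *
            (kk * (P / J) * c * h + P * h')
          + kk * (p1 + 2 * p2 * (L/J)) * (P * h))
      = 2*(p0*J^2 + p1*L*J + p2*L^2) * h' + kk*(2*c*(p0*J + p1*L) + p1 + 2*p2*L*((c*L+1)/J)) * h"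
    using J P by (simp add: field_simps power2_eq_square)
  also have "\<dots> = 2*(p0*J^2 + p1*L*J + p2*L^2) * h' + kk*(2*c*(p0*J + p1*L) + p1 + 2*p2*L*al) * h"
    using e J by simp
  also have "\<dots> = 2 * (p0*de^2 + p1*be*de + p2*be^2 + (2*p0*c*de + p1*(al*de+be*c) + 2*p2*al*be) * t
             + (p0*c^2 + p1*al*c + p2*al^2) * t^2) * h'
       + kk * ((2*p0*c*de + p1*(al*de+be*c) + 2*p2*al*be) + 2 * (p0*c^2 + p1*al*c + p2*al^2) * t) * h"
  proof -
    have "p1 = p1 * (al * de - be * c)" using det by simp
    then show ?thesis unfolding Jdef L_def by (simp add: algebra_simps power2_eq_square) algebra
  qed
  finally show ?thesis unfolding L_def .
qed

theorem lemma2p1: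
  fixes G :: "(real^2^2) set" and k :: int
  assumes "fuchsian G"
  shows "\<forall>a\<in>dk k. \<forall>A\<in>G. \<exists>b\<in>dk k. \<forall>h. h holomorphic_on upper_half_plane \<longrightarrow>
           (\<forall>\<tau>\<in>upper_half_plane. slash_apply k A a h \<tau> = apply_dop b h \<tau>)"
proof (intro ballI)
  fix a A assume a: "a \<in> dk k" and AG: "A \<in> G"
  obtain p :: "complex poly" where dp: "degree p \<le> 2"
    and adef: "a = ((\<lambda>\<tau>. 2 * poly p \<tau>), (\<lambda>\<tau>. of_int k * poly (pderiv p) \<tau>))"
    using a unfolding dk_def by blast
  have detA: "det A = 1" using assms AG unfolding fuchsian_def SL2R_def by blast
  define al where "al = complex_of_real (A$1$1)"
  define be where "be = complex_of_real (A$1$2)"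
  define c where "c = complex_of_real (A$2$1)"
  define de where "de = complex_of_real (A$2$2)"
  have det: "al * de - be * c = 1"
  proof -
    have "A$1$1 * A$2$2 - A$1$2 * A$2$1 = 1" using detA by (simp add: det_2)
    then have "complex_of_real (A$1$1 * A$2$2 - A$1$2 * A$2$1) = 1" by simp
    then show ?thesis unfolding al_def be_def c_def de_def by simp
  qed
  define p0 where "p0 = coeff p 0"
  define p1 where "p1 = coeff p 1"
  define p2 where "p2 = coeff p 2"
  have peq: "p = [:p0, p1, p2:]" using poly_deg2[OF dp] unfolding p0_def p1_def p2_def .
  define q where "q = [:p0*de^2 + p1*be*de + p2*be^2, 2*p0*c*de + p1*(al*de+be*c) + 2*p2*al*be,
                      p0*c^2 + p1*al*c + p2*al^2:]"
  have dq: "degree q \<le> 2" unfolding q_def by (simp add: degree_pCons_eq_if)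
  show "\<exists>b\<in>dk k. \<forall>h. h holomorphic_on upper_half_plane \<longrightarrow>
           (\<forall>\<tau>\<in>upper_half_plane. slash_apply k A a h \<tau> = apply_dop b h \<tau>)"
  proof (intro bexI allI impI ballI)
    show "((\<lambda>\<tau>. 2 * poly q \<tau>), (\<lambda>\<tau>. of_int k * poly (pderiv q) \<tau>)) \<in> dk k"
      unfolding dk_def using dq by blast
    fix h :: "complex \<Rightarrow> complex" and t
    assume hol: "h holomorphic_on upper_half_plane" and tH: "t \<in> upper_half_plane"
    have opH: "open upper_half_plane" unfolding upper_half_plane_def
      by (simp add: open_halfspace_Im_gt)
    have hd: "(h has_field_derivative deriv h t) (at t)"
      using hol opH tH holomorphic_derivI by blast
    have jeq: "jfac A = (\<lambda>t. c * t + de)" unfolding jfac_def c_def de_def by auto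
    have Jnz: "c * t + de \<noteq> 0"
    proof
      assume z: "c * t + de = 0"
      have "Im (c * t + de) = A$2$1 * Im t" unfolding c_def de_def by simp
      then have "A$2$1 = 0" using z tH unfolding upper_half_plane_def by simp
      then have "A$2$2 = 0" using z unfolding c_def de_def by simp
      then show False using det \<open>A$2$1 = 0\<close> unfolding c_def de_def by simp
    qed
    define J where "J = c * t + de"
    define P where "P = J powi k"
    have Pnz: "P \<noteq> 0" unfolding P_def J_def using Jnz by simp
    have der: "deriv (\<lambda>t. (jfac A t) powi k * h t) t = of_int k * (P / J) * c * h t + P * deriv h t"
    proof (rule DERIV_imp_deriv)
      have "((\<lambda>t. (c * t + de) powi k) has_field_derivative of_int k * J powi (k - 1) * c) (at t)"
        using Jnz unfolding J_def by (auto intro!: derivative_eq_intros)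
      moreover have "J powi (k - 1) = P / J" unfolding P_def using Jnz J_def
        by (simp add: power_int_diff)
      ultimately have "((\<lambda>t. (c * t + de) powi k) has_field_derivative of_int k * (P / J) * c) (at t)"
        by simp
      from DERIV_mult[OF this hd]
      show "((\<lambda>t. (jfac A t) powi k * h t) has_field_derivative
              of_int k * (P / J) * c * h t + P * deriv h t) (at t)"
        unfolding jeq P_def J_def by (simp add: algebra_simps)
    qed
    have mo: "moeb A t = (al*t+be)/J" unfolding moeb_def jeq J_def al_def be_def by simp
    have inv: "J powi (-k) = inverse P" unfolding P_def by (simp add: power_int_minus)
    have pp1: "poly [:p0,p1,p2:] x = p0 + p1*x + p2*x^2" for x p0 p1 p2 :: complex
      by (simp add: algebra_simps power2_eq_square)
    have pp2: "poly (pderiv [:p0,p1,p2:]) x = p1 + 2*p2*x" for x p0 p1 p2 :: complex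
      by (simp add: pderiv_pCons algebra_simps)
    have pp3: "poly [:x0,x1,x2:] x = x0 + x1*x + x2*x^2" for x x0 x1 x2 :: complex
      by (simp add: algebra_simps power2_eq_square)
    have pp4: "poly (pderiv [:x0,x1,x2:]) x = x1 + 2*x2*x" for x x0 x1 x2 :: complex
      by (simp add: pderiv_pCons algebra_simps)
    show "slash_apply k A a h t = apply_dop ((\<lambda>\<tau>. 2 * poly q \<tau>), (\<lambda>\<tau>. of_int k * poly (pderiv q) \<tau>)) h t"
      unfolding slash_apply_def apply_dop_def der mo adef
      apply (simp only: fst_conv snd_conv jeq flip: J_def)
      unfolding inv P_def[symmetric] peq q_def
      apply (simp only: pp1 pp2 pp3 pp4)
      using key_identity[OF Jnz[folded J_def] Pnz det J_def, of p0 p1 p2 "of_int k" "h t" "deriv h t"]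
      by (simp add: mult.assoc)
  qed
qed

end
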